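(* Let $\mathcal{G}$ be an additive arithmetical semigroup satisfying Axiom $A^{\#}$ (constants $c_{\mathcal{G}}>0$, $q>1$) with $Z_{\mathcal{G}}(-q^{-1})\ne0$. For integers $n,m\ge0$ define $$C(n,m)=\sum_{\substack{\partial(g)=n\\ d_-(g)>m}}\mu(g),\qquad M(n,m)=\sum_{\substack{\partial(g)\le n\\ d_-(g)>m}}\mu(g).$$ Then there is a constant $0\le\eta<1$ such that $C(n,m)\ll q^{\eta n}\exp(q^m)$ and $M(n,m)\ll q^{\eta n}\exp(q^m)$, uniformly for $n,m\ge1$.
   Context: An additive arithmetical semigroup is a commutative monoid $\mathcal{G}$ (written additively, identity $e_{\mathcal{G}}$) freely generated by a countable set $\mathcal{P}$ of primes, with an additive degree map $\partial\colon\mathcal{G}\to\mathbb{Z}_{\ge0}$, $\partial(e_{\mathcal{G}})=0$, $\partial(P)>0$ for primes, finitely many elements of each degree. Axiom $A^{\#}$: $\#\{g:\partial(g)=n\}=c_{\mathcal{G}}q^n+O(q^{\eta_0 n})$ for some $0\le\eta_0<1$. $Z_{\mathcal{G}}(z)=\prod_{P}(1-z^{\partial(P)})^{-1}$ (meromorphically continued). $P\mid g$ means $g=P+r$ for some $r$. $d_-(g)=\min\{\partial(P):P\mid g\}$ for $g\ne e_{\mathcal{G}}$, and $e_{\mathcal{G}}$ is regarded as satisfying $d_-(e_{\mathcal{G}})>m$ for every $m$. $\mu$ is the Möbius function on $\mathcal{G}$. *)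

theory Defs
  imports "HOL-Analysis.Analysis" "HOL-Library.Multiset"
begin

text \<open>An additive arithmetical semigroup is modelled as the free commutative monoid
  on a type 'p of primes, i.e. finite multisets over 'p (identity = empty multiset,
  addition = multiset sum).\<close>

definition adeg :: "('p \<Rightarrow> nat) \<Rightarrow> 'p multiset \<Rightarrow> nat" where
  "adeg deg g = sum_mset (image_mset deg g)"

definition Gcount :: "('p \<Rightarrow> nat) \<Rightarrow> nat \<Rightarrow> nat" where
  "Gcount deg n = card {g. adeg deg g = n}"

definition amu :: "'p multiset \<Rightarrow> int" where
  "amu g = (if \<forall>p. count g p \<le> 1 then (-1) ^ size g else 0)"

text \<open>d_-(g) > m, with the convention that the identity satisfies it for every m.\<close>
definition dminus_gt :: "('p \<Rightarrow> nat) \<Rightarrow> 'p multiset \<Rightarrow> nat \<Rightarrow> bool" where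
  "dminus_gt deg g m \<longleftrightarrow> (\<forall>p \<in># g. m < deg p)"

definition Csum :: "('p \<Rightarrow> nat) \<Rightarrow> nat \<Rightarrow> nat \<Rightarrow> int" where
  "Csum deg n m = (\<Sum>g \<in> {g. adeg deg g = n \<and> dminus_gt deg g m}. amu g)"

definition Msum :: "('p \<Rightarrow> nat) \<Rightarrow> nat \<Rightarrow> nat \<Rightarrow> int" where
  "Msum deg n m = (\<Sum>g \<in> {g. adeg deg g \<le> n \<and> dminus_gt deg g m}. amu g)"

definition arith_semigroup :: "('p \<Rightarrow> nat) \<Rightarrow> bool" where
  "arith_semigroup deg \<longleftrightarrow> (\<forall>p. 0 < deg p) \<and> (\<forall>n. finite {g. adeg deg g = n})"

definition axiom_A_sharp :: "('p \<Rightarrow> nat) \<Rightarrow> real \<Rightarrow> real \<Rightarrow> bool" where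
  "axiom_A_sharp deg c q \<longleftrightarrow>
     (\<exists>\<eta>0 K. 0 \<le> \<eta>0 \<and> \<eta>0 < 1 \<and>
        (\<forall>n. \<bar>real (Gcount deg n) - c * q ^ n\<bar> \<le> K * q powr (\<eta>0 * real n)))"

text \<open>f (on the domain ball 0 r minus the point 1/q, with r > 1/q) is a meromorphic
  continuation of Z_G(z) = \<Sum>_g z^(deg g) = \<Sum>_n G(n) z^n.  Since the domain is
  connected, such a continuation is unique, so its value at -1/q is Z_G(-1/q).\<close>
definition Z_continuation :: "('p \<Rightarrow> nat) \<Rightarrow> real \<Rightarrow> (complex \<Rightarrow> complex) \<Rightarrow> real \<Rightarrow> bool" where
  "Z_continuation deg q f r \<longleftrightarrow>
     1 / q < r \<and> f holomorphic_on (ball 0 r - {complex_of_real (1 / q)}) \<and>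
     (\<forall>z. norm z < 1 / q \<longrightarrow> (\<lambda>n. of_nat (Gcount deg n) * z ^ n) sums f z)"

end

theory Submission
  imports Defs "HOL-Complex_Analysis.Complex_Analysis"
begin


lemma sum_mset_count: "sum_mset (image_mset f M) = (\<Sum>x\<in>set_mset M. count M x * (f x::nat))"
proof (induction M)
  case empty then show ?case by simp
next
  case (add x M)
  have e: "\<And>y. count (add_mset x M) y * f y = count M y * f y + (if x = y then f x else 0)"
    by auto
  show ?case
  proof (cases "x \<in># M")
    case True
    have "(\<Sum>y\<in>set_mset M. count (add_mset x M) y * f y) = (\<Sum>y\<in>set_mset M. count M y * f y) + f x"
      unfolding e sum.distrib using True by simp
    then show ?thesis using add True by (simp add: insert_absorb)
  next
    case False
    have "(\<Sum>y\<in>set_mset M. count (add_mset x M) y * f y) = (\<Sum>y\<in>set_mset M. count M y * f y)"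
      using False by (intro sum.cong) auto
    then show ?thesis using add False by (simp add: not_in_iff)
  qed
qed

lemma adeg_empty[simp]: "adeg deg {#} = 0" by (simp add: adeg_def)
lemma adeg_add_mset[simp]: "adeg deg (add_mset p g) = deg p + adeg deg g" by (simp add: adeg_def)
lemma adeg_plus[simp]: "adeg deg (a + b) = adeg deg a + adeg deg b" by (simp add: adeg_def)
lemma adeg_replicate[simp]: "adeg deg (replicate_mset j p) = j * deg p" by (induction j) auto
lemma adeg_mono: "a \<subseteq># b \<Longrightarrow> adeg deg a \<le> adeg deg b"
  by (metis adeg_plus le_add1 subset_mset.le_iff_add)
lemma adeg_diff: "a \<subseteq># b \<Longrightarrow> adeg deg (b - a) = adeg deg b - adeg deg a"
  by (metis adeg_plus add_diff_cancel_left' subset_mset.add_diff_inverse)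
lemma adeg_eq_sum: "adeg deg g = (\<Sum>p\<in>set_mset g. count g p * deg p)"
  by (simp add: adeg_def sum_mset_count)
lemma count_le_adeg: "count g p * deg p \<le> adeg deg g"
proof -
  have "replicate_mset (count g p) p \<subseteq># g"
    by (simp add: subseteq_mset_def count_replicate_mset)
  from adeg_mono[OF this, of deg] show ?thesis by simp
qed

lemma as_pos: "arith_semigroup deg \<Longrightarrow> 0 < deg p"
  by (simp add: arith_semigroup_def)
lemma as_fin: "arith_semigroup deg \<Longrightarrow> finite {g. adeg deg g = n}"
  by (simp add: arith_semigroup_def)
lemma as_fin_le: assumes "arith_semigroup deg" shows "finite {g. adeg deg g \<le> N}"
proof -
  have "{g. adeg deg g \<le> N} = (\<Union>k\<le>N. {g. adeg deg g = k})" by auto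
  then show ?thesis using as_fin[OF assms] by simp
qed
lemma adeg_0_iff: assumes "arith_semigroup deg" shows "adeg deg g = 0 \<longleftrightarrow> g = {#}"
proof
  assume "adeg deg g = 0"
  show "g = {#}"
  proof (rule ccontr)
    assume "g \<noteq> {#}"
    then obtain p where "p \<in># g" by blast
    then have "g = add_mset p (g - {#p#})" by simp
    then have "adeg deg g \<ge> deg p" by (metis adeg_add_mset le_add1)
    with as_pos[OF assms, of p] \<open>adeg deg g = 0\<close> show False by simp
  qed
qed simp
lemma as_fin_primes: assumes "arith_semigroup deg" shows "finite {p. deg p \<le> N}"
proof -
  have "(\<lambda>p. {#p#}) ` {p. deg p \<le> N} \<subseteq> {g. adeg deg g \<le> N}" by auto
  then have "finite ((\<lambda>p. {#p#}) ` {p. deg p \<le> N})"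
    using as_fin_le[OF assms] finite_subset by blast
  then show ?thesis by (rule finite_imageD) (auto simp: inj_on_def)
qed

lemma amu_add_mset: assumes "p \<notin># h" shows "amu (add_mset p h) = - amu h"
proof -
  have hp: "count h p = 0" using assms by (simp add: not_in_iff)
  have "(\<forall>x. count (add_mset p h) x \<le> 1) \<longleftrightarrow> (\<forall>x. count h x \<le> 1)"
  proof
    assume a: "\<forall>x. count (add_mset p h) x \<le> 1"
    show "\<forall>x. count h x \<le> 1"
    proof
      fix x have "count h x \<le> count (add_mset p h) x" by simp
      then show "count h x \<le> 1" using a order_trans by blast
    qed
  next
    assume a: "\<forall>x. count h x \<le> 1"
    show "\<forall>x. count (add_mset p h) x \<le> 1"
    proof
      fix x show "count (add_mset p h) x \<le> 1"
        using a hp by (cases "x = p") auto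
    qed
  qed
  then show ?thesis by (simp add: amu_def)
qed
lemma amu_zero: assumes "2 \<le> count h p" shows "amu h = 0"
proof -
  have "\<not> (\<forall>x. count h x \<le> 1)" using assms by (metis not_less_eq_eq numeral_2_eq_2 One_nat_def)
  then show ?thesis unfolding amu_def by simp
qed

lemma mob_inner:
  fixes deg :: "'p \<Rightarrow> nat" and g :: "'p multiset"
  assumes AS: "arith_semigroup deg"
  shows "(\<Sum>h\<in>{h. h \<subseteq># g \<and> (\<forall>x\<in>#(g-h). S x)}. amu h) = (if \<forall>x\<in>#g. \<not> S x then amu g else 0)"
proof -
  define D where "D = {h. h \<subseteq># g \<and> (\<forall>x\<in>#(g-h). S x)}"
  have finD: "finite D"
    by (rule finite_subset[OF _ as_fin_le[OF AS, of "adeg deg g"]]) (auto simp: D_def adeg_mono)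
  show ?thesis
  proof (cases "\<forall>x\<in>#g. \<not> S x")
    case True
    have "D = {g}"
    proof
      show "D \<subseteq> {g}"
      proof
        fix h assume h: "h \<in> D"
        have "g - h = {#}"
        proof (rule ccontr)
          assume "g - h \<noteq> {#}"
          then obtain x where x: "x \<in># g - h" by blast
          then have "x \<in># g" by (meson in_diffD)
          with x h True show False by (auto simp: D_def)
        qed
        then have "g \<subseteq># h" by (simp add: Diff_eq_empty_iff_mset)
        with h show "h \<in> {g}" by (auto simp: D_def)
      qed
    qed (auto simp: D_def)
    then show ?thesis using True by (simp add: D_def[symmetric])
  next
    case False
    then obtain p where p: "p \<in># g" "S p" by blast
    define X1 where "X1 = {h\<in>D. p \<notin># h}"
    define X2 where "X2 = {h\<in>D. p \<in># h}"
    define X2' where "X2' = {h\<in>D. count h p = 1}"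
    have DX: "D = X1 \<union> X2" "X1 \<inter> X2 = {}" by (auto simp: X1_def X2_def)
    have fin12: "finite X1" "finite X2" using finD by (auto simp: X1_def X2_def)
    have s2: "sum amu X2 = sum amu X2'"
    proof (rule sum.mono_neutral_right)
      show "finite X2" by (rule fin12)
      show "X2' \<subseteq> X2" by (auto simp: X2_def X2'_def) (metis count_inI zero_neq_one One_nat_def)
      show "\<forall>h\<in>X2 - X2'. amu h = 0"
      proof
        fix h assume "h \<in> X2 - X2'"
        then have "2 \<le> count h p" by (auto simp: X2_def X2'_def)
          (metis One_nat_def Suc_1 Suc_leI count_eq_zero_iff le_neq_implies_less less_one not_less_eq_eq)
        then show "amu h = 0" by (rule amu_zero)
      qed
    qed
    have img: "X2' = add_mset p ` X1"
    proof
      show "add_mset p ` X1 \<subseteq> X2'"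
      proof
        fix h' assume "h' \<in> add_mset p ` X1"
        then obtain h where h: "h \<in> X1" "h' = add_mset p h" by blast
        have hp: "count h p = 0" using h by (simp add: X1_def not_in_iff)
        have hg: "h \<subseteq># g" "\<forall>x\<in>#(g-h). S x" using h by (auto simp: X1_def D_def)
        have gp: "count g p \<ge> 1" using p by (simp add: Suc_le_eq)
        have sub: "add_mset p h \<subseteq># g"
          unfolding subseteq_mset_def
        proof
          fix a show "count (add_mset p h) a \<le> count g a"
            using hp gp hg(1) by (cases "a = p") (auto simp: subseteq_mset_def)
        qed
        have "\<forall>x\<in>#(g - add_mset p h). S x"
        proof
          fix x assume "x \<in># g - add_mset p h"
          then have "count (add_mset p h) x < count g x" by (simp add: in_diff_count)
          then have "count h x < count g x" by (cases "x = p") auto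
          then show "S x" using hg(2) by (simp add: in_diff_count)
        qed
        then show "h' \<in> X2'" using sub hp h(2) by (simp add: X2'_def D_def)
      qed
    next
      show "X2' \<subseteq> add_mset p ` X1"
      proof
        fix h assume h: "h \<in> X2'"
        then have c1: "count h p = 1" and hg: "h \<subseteq># g" "\<forall>x\<in>#(g-h). S x"
          by (auto simp: X2'_def D_def)
        have pin: "p \<in># h" using c1 by (metis count_inI zero_neq_one)
        define h0 where "h0 = h - {#p#}"
        have hh0: "h = add_mset p h0" using pin by (simp add: h0_def)
        have "h0 \<in> X1"
        proof -
          have "h0 \<subseteq># g" using hg(1) by (simp add: h0_def subset_mset.order_trans[OF _ hg(1)])
          moreover have "p \<notin># h0" using c1 by (simp add: h0_def not_in_iff)
          moreover have "\<forall>x\<in>#(g-h0). S x"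
          proof
            fix x assume "x \<in># g - h0"
            then have x: "count h0 x < count g x" by (simp add: in_diff_count)
            show "S x"
            proof (cases "x = p")
              case True then show ?thesis using p by simp
            next
              case False
              then have "count h x = count h0 x" by (simp add: hh0)
              with x hg(2) show ?thesis by (simp add: in_diff_count)
            qed
          qed
          ultimately show ?thesis by (simp add: X1_def D_def)
        qed
        then show "h \<in> add_mset p ` X1" using hh0 by blast
      qed
    qed
    have "sum amu X2' = (\<Sum>h\<in>X1. amu (add_mset p h))"
      unfolding img by (subst sum.reindex) (auto simp: inj_on_def)
    also have "\<dots> = - sum amu X1"
      by (simp add: X1_def amu_add_mset sum_negf)
    finally have "sum amu D = 0"
      using DX fin12 s2 by (simp add: sum.union_disjoint)
    then show ?thesis using False by (auto simp: D_def)
  qed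
qed


definition bS :: "('p \<Rightarrow> nat) \<Rightarrow> ('p \<Rightarrow> bool) \<Rightarrow> nat \<Rightarrow> nat" where
  "bS deg S j = card {g. adeg deg g = j \<and> (\<forall>x\<in>#g. S x)}"
definition c0 :: "('p \<Rightarrow> nat) \<Rightarrow> nat \<Rightarrow> int" where
  "c0 deg k = (\<Sum>g\<in>{g. adeg deg g = k}. amu g)"

lemma conv_I:
  fixes deg :: "'p \<Rightarrow> nat" and S :: "'p \<Rightarrow> bool"
  assumes AS: "arith_semigroup deg"
  shows "(\<Sum>k\<le>n. c0 deg k * int (bS deg S (n-k))) = (\<Sum>g\<in>{g. adeg deg g = n \<and> (\<forall>x\<in>#g. \<not> S x)}. amu g)"
proof -
  define A where "A = {h::'p multiset. adeg deg h \<le> n}"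
  define B where "B = {g::'p multiset. adeg deg g = n}"
  define R where "R = (\<lambda>h g. h \<subseteq># g \<and> (\<forall>x\<in>#(g-h). S x))"
  have finA: "finite A" and finB: "finite B" using as_fin_le[OF AS] as_fin[OF AS] by (auto simp: A_def B_def)
  have card_eq: "card {g\<in>B. R h g} = bS deg S (n - adeg deg h)" if "h \<in> A" for h
  proof -
    have "bij_betw (\<lambda>g. g - h) {g\<in>B. R h g} {g. adeg deg g = n - adeg deg h \<and> (\<forall>x\<in>#g. S x)}"
    proof (rule bij_betw_byWitness[where f' = "\<lambda>g'. h + g'"])
      show "\<forall>g\<in>{g\<in>B. R h g}. h + (g - h) = g" by (auto simp: R_def)
      show "\<forall>g'\<in>{g. adeg deg g = n - adeg deg h \<and> (\<forall>x\<in>#g. S x)}. (h + g') - h = g'" by simp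
      show "(\<lambda>g. g - h) ` {g\<in>B. R h g} \<subseteq> {g. adeg deg g = n - adeg deg h \<and> (\<forall>x\<in>#g. S x)}"
        by (auto simp: B_def R_def adeg_diff)
      show "(\<lambda>g'. h + g') ` {g. adeg deg g = n - adeg deg h \<and> (\<forall>x\<in>#g. S x)} \<subseteq> {g\<in>B. R h g}"
        using that by (auto simp: A_def B_def R_def)
    qed
    then show ?thesis unfolding bS_def by (rule bij_betw_same_card)
  qed
  have "(\<Sum>k\<le>n. c0 deg k * int (bS deg S (n-k))) = (\<Sum>k\<le>n. \<Sum>h\<in>{h. adeg deg h = k}. amu h * int (bS deg S (n - adeg deg h)))"
    by (simp add: c0_def sum_distrib_right)
  also have "\<dots> = (\<Sum>h\<in>A. amu h * int (bS deg S (n - adeg deg h)))"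
  proof -
    have Aeq: "A = (\<Union>k\<le>n. {h. adeg deg h = k})" by (auto simp: A_def)
    have "(\<Sum>h\<in>A. amu h * int (bS deg S (n - adeg deg h))) = (\<Sum>k\<le>n. \<Sum>h\<in>{h. adeg deg h = k}. amu h * int (bS deg S (n - adeg deg h)))"
      unfolding Aeq by (rule sum.UNION_disjoint) (auto simp: as_fin[OF AS])
    then show ?thesis by simp
  qed
  also have "\<dots> = (\<Sum>h\<in>A. \<Sum>g\<in>{g\<in>B. R h g}. amu h)"
    by (intro sum.cong refl) (simp add: card_eq)
  also have "\<dots> = (\<Sum>g\<in>B. \<Sum>h\<in>{h\<in>A. R h g}. amu h)"
    by (rule sum.swap_restrict[OF finA finB])
  also have "\<dots> = (\<Sum>g\<in>B. if \<forall>x\<in>#g. \<not> S x then amu g else 0)"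
  proof (intro sum.cong refl)
    fix g assume g: "g \<in> B"
    have "{h\<in>A. R h g} = {h. h \<subseteq># g \<and> (\<forall>x\<in>#(g-h). S x)}"
      using g by (auto simp: A_def B_def R_def dest: adeg_mono[of _ _ deg])
    then show "(\<Sum>h\<in>{h\<in>A. R h g}. amu h) = (if \<forall>x\<in>#g. \<not> S x then amu g else 0)"
      using mob_inner[OF AS] by simp
  qed
  also have "\<dots> = (\<Sum>g\<in>{g. adeg deg g = n \<and> (\<forall>x\<in>#g. \<not> S x)}. amu g)"
    using sum.inter_filter[OF finB, of amu "\<lambda>g. \<forall>x\<in>#g. \<not> S x"] by (simp add: B_def)
  finally show ?thesis .
qed


definition PJ :: "('p \<Rightarrow> nat) \<Rightarrow> nat \<Rightarrow> ('p \<times> nat) set" where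
  "PJ deg k = {(p,j). 1 \<le> j \<and> j * deg p = k}"
definition Lam :: "('p \<Rightarrow> nat) \<Rightarrow> nat \<Rightarrow> nat" where
  "Lam deg k = (\<Sum>x\<in>PJ deg k. deg (fst x))"

lemma adeg_D: "adeg deg g = (\<Sum>x\<in>{(p,j). 1 \<le> j \<and> j \<le> count g p}. deg (fst x))"
proof -
  have e: "{(p,j). 1 \<le> j \<and> j \<le> count g p} = Sigma (set_mset g) (\<lambda>p. {1..count g p})"
    by (auto intro!: count_inI)
  have "(\<Sum>p\<in>set_mset g. \<Sum>j\<in>{1..count g p}. deg p) = (\<Sum>(p,j)\<in>Sigma (set_mset g) (\<lambda>p. {1..count g p}). deg p)"
    by (rule sum.Sigma) auto
  also have "\<dots> = (\<Sum>x\<in>{(p,j). 1 \<le> j \<and> j \<le> count g p}. deg (fst x))"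
    unfolding e by (simp add: case_prod_beta)
  finally show ?thesis by (simp add: adeg_eq_sum)
qed

lemma conv_II:
  fixes deg :: "'p \<Rightarrow> nat"
  assumes AS: "arith_semigroup deg"
  shows "n * Gcount deg n = (\<Sum>k\<in>{1..n}. Lam deg k * Gcount deg (n-k))"
proof -
  define PJall where "PJall = {(p,j::nat). 1 \<le> j \<and> j * deg p \<le> n}"
  define B where "B = {g::'p multiset. adeg deg g = n}"
  define D where "D = (\<lambda>g::'p multiset. {(p,j::nat). 1 \<le> j \<and> j \<le> count g p})"
  have finB: "finite B" using as_fin[OF AS] by (simp add: B_def)
  have finPJ: "finite PJall"
  proof (rule finite_subset[of _ "{p. deg p \<le> n} \<times> {1..n}"])
    show "PJall \<subseteq> {p. deg p \<le> n} \<times> {1..n}"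
    proof
      fix x assume "x \<in> PJall"
      then obtain p j where x: "x = (p,j)" "1 \<le> j" "j * deg p \<le> n" by (auto simp: PJall_def)
      have "1 \<le> deg p" using as_pos[OF AS, of p] by simp
      have "deg p \<le> j * deg p" "j \<le> j * deg p"
        using mult_le_mono1[OF x(2), of "deg p"] mult_le_mono2[OF \<open>1 \<le> deg p\<close>, of j] by simp_all
      then have "deg p \<le> n" "j \<le> n" using x(3) by linarith+
      with x show "x \<in> {p. deg p \<le> n} \<times> {1..n}" by auto
    qed
  qed (use as_fin_primes[OF AS] in auto)
  have "n * Gcount deg n = (\<Sum>g\<in>B. adeg deg g)" by (simp add: B_def Gcount_def)
  also have "\<dots> = (\<Sum>g\<in>B. \<Sum>x\<in>{x\<in>PJall. x \<in> D g}. deg (fst x))"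
  proof (intro sum.cong refl)
    fix g assume g: "g \<in> B"
    have "{x\<in>PJall. x \<in> D g} = D g"
    proof (auto simp: PJall_def D_def)
      fix p j assume "j \<le> count g p"
      then have "j * deg p \<le> count g p * deg p" by simp
      also have "\<dots> \<le> adeg deg g" by (rule count_le_adeg)
      finally show "j * deg p \<le> n" using g by (simp add: B_def)
    qed
    then show "adeg deg g = (\<Sum>x\<in>{x\<in>PJall. x \<in> D g}. deg (fst x))"
      by (simp add: D_def adeg_D)
  qed
  also have "\<dots> = (\<Sum>x\<in>PJall. \<Sum>g\<in>{g\<in>B. x \<in> D g}. deg (fst x))"
    by (rule sum.swap_restrict[OF finB finPJ])
  also have "\<dots> = (\<Sum>x\<in>PJall. deg (fst x) * Gcount deg (n - snd x * deg (fst x)))"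
  proof (intro sum.cong refl)
    fix x assume x: "x \<in> PJall"
    obtain p j where pj: "x = (p,j)" by (cases x)
    have j1: "1 \<le> j" and jn: "j * deg p \<le> n" using x pj by (auto simp: PJall_def)
    let ?r = "replicate_mset j p"
    have "bij_betw (\<lambda>g. g - ?r) {g\<in>B. x \<in> D g} {h. adeg deg h = n - j * deg p}"
    proof (rule bij_betw_byWitness[where f' = "\<lambda>h. h + ?r"])
      have sub: "?r \<subseteq># g" if "g \<in> {g\<in>B. x \<in> D g}" for g
        using that pj by (auto simp: D_def subseteq_mset_def count_replicate_mset)
      show "\<forall>g\<in>{g\<in>B. x \<in> D g}. g - ?r + ?r = g"
        using sub by (auto simp: subset_mset.diff_add)
      show "\<forall>h\<in>{h. adeg deg h = n - j * deg p}. h + ?r - ?r = h" by simp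
      show "(\<lambda>g. g - ?r) ` {g\<in>B. x \<in> D g} \<subseteq> {h. adeg deg h = n - j * deg p}"
        using sub by (auto simp: adeg_diff B_def)
      show "(\<lambda>h. h + ?r) ` {h. adeg deg h = n - j * deg p} \<subseteq> {g\<in>B. x \<in> D g}"
        using jn j1 pj by (auto simp: B_def D_def)
    qed
    then have "card {g\<in>B. x \<in> D g} = Gcount deg (n - j * deg p)"
      unfolding Gcount_def by (rule bij_betw_same_card)
    then show "(\<Sum>g\<in>{g\<in>B. x \<in> D g}. deg (fst x)) = deg (fst x) * Gcount deg (n - snd x * deg (fst x))"
      using pj by simp
  qed
  also have "\<dots> = (\<Sum>k\<in>{1..n}. \<Sum>x\<in>PJ deg k. deg (fst x) * Gcount deg (n - snd x * deg (fst x)))"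
  proof -
    have Peq: "PJall = (\<Union>k\<in>{1..n}. PJ deg k)"
      using as_pos[OF AS] by (auto simp: PJall_def PJ_def Suc_le_eq)
    have fk: "finite (PJ deg k)" if "k \<in> {1..n}" for k
      by (rule finite_subset[OF _ finPJ]) (use that in \<open>auto simp: PJ_def PJall_def\<close>)
    show ?thesis unfolding Peq
      by (rule sum.UNION_disjoint) (simp, simp add: fk, auto simp: PJ_def)
  qed
  also have "\<dots> = (\<Sum>k\<in>{1..n}. Lam deg k * Gcount deg (n-k))"
    unfolding Lam_def sum_distrib_right
    by (intro sum.cong refl) (auto simp: PJ_def)
  finally show ?thesis .
qed


lemma geom_le: fixes r :: real assumes "0 \<le> r" "r < 1" shows "(\<Sum>e\<le>N. r ^ e) \<le> 1 / (1 - r)"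
proof -
  have "(\<Sum>e\<le>N. r ^ e) \<le> (\<Sum>e. r ^ e)"
    by (rule sum_le_suminf) (use assms in \<open>auto intro: summable_geometric\<close>)
  also have "\<dots> = 1 / (1 - r)" using assms by (simp add: suminf_geometric)
  finally show ?thesis .
qed

lemma prod_bound:
  fixes deg :: "'p \<Rightarrow> nat" and y :: real
  assumes AS: "arith_semigroup deg" and P: "finite P" and y: "0 \<le> y" "y < 1"
  shows "(\<Sum>g\<in>{g. set_mset g \<subseteq> P \<and> adeg deg g \<le> N}. y ^ adeg deg g) \<le> (\<Prod>p\<in>P. 1 / (1 - y ^ deg p))"
  using P
proof (induction P rule: finite_induct)
  case empty
  have "{g::'p multiset. set_mset g \<subseteq> {} \<and> adeg deg g \<le> N} = {{#}}" by auto
  then show ?case by simp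
next
  case (insert p P)
  define T where "T = (\<lambda>Q. {g::'p multiset. set_mset g \<subseteq> Q \<and> adeg deg g \<le> N})"
  have finT: "finite (T Q)" for Q
    by (rule finite_subset[OF _ as_fin_le[OF AS, of N]]) (auto simp: T_def)
  define \<phi> where "\<phi> = (\<lambda>g::'p multiset. (count g p, filter_mset (\<lambda>x. x \<noteq> p) g))"
  have dec: "g = replicate_mset (count g p) p + filter_mset (\<lambda>x. x \<noteq> p) g" for g :: "'p multiset"
    by (metis filter_eq_replicate_mset multiset_partition)
  have adeg_dec: "adeg deg g = count g p * deg p + adeg deg (filter_mset (\<lambda>x. x \<noteq> p) g)" for g
    by (subst dec) simp
  have inj: "inj_on \<phi> (T (insert p P))"
  proof (rule inj_onI)
    fix g1 g2 assume "\<phi> g1 = \<phi> g2"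
    then have "count g1 p = count g2 p" "filter_mset (\<lambda>x. x \<noteq> p) g1 = filter_mset (\<lambda>x. x \<noteq> p) g2"
      by (auto simp: \<phi>_def)
    then show "g1 = g2" using dec[of g1] dec[of g2] by metis
  qed
  have y1: "0 \<le> y ^ deg p" "y ^ deg p < 1"
    using y as_pos[OF AS, of p] by (auto simp: power_less_one_iff)
  have img: "\<phi> ` T (insert p P) \<subseteq> {..N} \<times> T P"
  proof
    fix x assume "x \<in> \<phi> ` T (insert p P)"
    then obtain g where g: "g \<in> T (insert p P)" "x = \<phi> g" by blast
    have "count g p * deg p \<le> adeg deg g" by (rule count_le_adeg)
    moreover have "count g p \<le> count g p * deg p" using as_pos[OF AS, of p] by simp
    moreover have "adeg deg g \<le> N" using g by (simp add: T_def)
    ultimately have "count g p \<le> N" by linarith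
    moreover have "adeg deg (filter_mset (\<lambda>x. x \<noteq> p) g) \<le> N"
      using g adeg_dec[of g] by (auto simp: T_def)
    moreover have "set_mset (filter_mset (\<lambda>x. x \<noteq> p) g) \<subseteq> P" using g by (auto simp: T_def)
    ultimately show "x \<in> {..N} \<times> T P" using g by (auto simp: T_def \<phi>_def)
  qed
  have "(\<Sum>g\<in>T (insert p P). y ^ adeg deg g) = (\<Sum>x\<in>\<phi> ` T (insert p P). y ^ (fst x * deg p) * y ^ adeg deg (snd x))"
    by (subst sum.reindex[OF inj]) (auto simp: \<phi>_def adeg_dec[symmetric] power_add[symmetric] intro!: sum.cong)
  also have "\<dots> \<le> (\<Sum>x\<in>{..N} \<times> T P. y ^ (fst x * deg p) * y ^ adeg deg (snd x))"
    by (rule sum_mono2) (use img finT y in auto)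
  also have "\<dots> = (\<Sum>x\<in>{..N} \<times> T P. (y ^ deg p) ^ fst x * y ^ adeg deg (snd x))"
    by (intro sum.cong refl) (simp add: power_mult[symmetric] mult.commute[of _ "deg p"])
  also have "\<dots> = (\<Sum>e\<le>N. (y ^ deg p) ^ e) * (\<Sum>h\<in>T P. y ^ adeg deg h)"
    by (simp add: sum_product sum.cartesian_product case_prod_beta)
  also have "\<dots> \<le> (1 / (1 - y ^ deg p)) * (\<Prod>p\<in>P. 1 / (1 - y ^ deg p))"
  proof (rule mult_mono)
    show "(\<Sum>e\<le>N. (y ^ deg p) ^ e) \<le> 1 / (1 - y ^ deg p)" by (rule geom_le[OF y1])
    show "(\<Sum>h\<in>T P. y ^ adeg deg h) \<le> (\<Prod>p\<in>P. 1 / (1 - y ^ deg p))" using insert.IH by (simp add: T_def)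
    show "0 \<le> 1 / (1 - y ^ deg p)" using y1 by simp
    show "0 \<le> (\<Sum>h\<in>T P. y ^ adeg deg h)" using y by (simp add: sum_nonneg)
  qed
  also have "\<dots> = (\<Prod>p\<in>insert p P. 1 / (1 - y ^ deg p))" using insert by simp
  finally show ?case by (simp add: T_def)
qed



lemma sum_rev_atMost: "(\<Sum>k\<le>n. h (n - k)) = (\<Sum>j\<le>(n::nat). h j)"
  by (rule sum.reindex_bij_witness[where i="\<lambda>j. n - j" and j="\<lambda>k. n - k"]) auto

lemma G_bound:
  assumes AS: "arith_semigroup deg" and q: "1 < q" and Ash: "axiom_A_sharp deg c q" and c: "0 < c"
  shows "\<exists>A>0. \<forall>k. real (Gcount deg k) \<le> A * q ^ k"
proof -
  obtain \<eta>0 K where e: "0 \<le> \<eta>0" "\<eta>0 < 1" and b: "\<And>n. \<bar>real (Gcount deg n) - c * q ^ n\<bar> \<le> K * q powr (\<eta>0 * real n)"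
    using Ash unfolding axiom_A_sharp_def by blast
  have "\<bar>real (Gcount deg 0) - c * q ^ 0\<bar> \<le> K * q powr (\<eta>0 * real 0)" by (rule b)
  then have K: "0 \<le> K" using q by simp
  have "real (Gcount deg k) \<le> (c + K) * q ^ k" for k
  proof -
    have "q powr (\<eta>0 * real k) \<le> q powr (real k)"
      using e q by (intro powr_mono) (auto simp: mult_left_le_one_le)
    also have "\<dots> = q ^ k" using q by (simp add: powr_realpow)
    finally have "K * q powr (\<eta>0 * real k) \<le> K * q ^ k" using K by (simp add: mult_left_mono)
    then show ?thesis using b[of k] by (simp add: algebra_simps)
  qed
  moreover have "0 < c + K" using c K by simp
  ultimately show ?thesis by blast
qed

lemma eventually_small_bound:
  fixes a y q :: real
  assumes "0 \<le> a" "0 < y" "y < 1" "1 \<le> q"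
  shows "\<exists>C. \<forall>m. a * (q * y) ^ m \<le> q ^ m + C"
proof -
  have "(\<lambda>m. y ^ m) \<longlonglongrightarrow> 0" using assms by (intro LIMSEQ_power_zero) simp
  then have "(\<lambda>m. a * y ^ m) \<longlonglongrightarrow> 0"
    by (rule tendsto_mult_right_zero)
  then have "eventually (\<lambda>m. a * y ^ m < 1) sequentially"
    by (rule order_tendstoD(2)) simp
  then obtain m0 where m0: "\<And>m. m \<ge> m0 \<Longrightarrow> a * y ^ m < 1" by (auto simp: eventually_sequentially)
  have "a * (q * y) ^ m \<le> q ^ m + a * q ^ m0" for m
  proof (cases "m \<ge> m0")
    case True
    then have "a * (q * y) ^ m = (a * y ^ m) * q ^ m" by (simp add: power_mult_distrib)
    also have "\<dots> \<le> 1 * q ^ m" using m0[OF True] assms by (intro mult_right_mono) auto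
    finally have "a * (q * y) ^ m \<le> q ^ m" by simp
    moreover have "0 \<le> a * q ^ m0" using assms by simp
    ultimately show ?thesis by linarith
  next
    case False
    have "(q * y) ^ m \<le> q ^ m" using assms by (intro power_mono) (auto simp: mult_le_cancel_left1)
    also have "\<dots> \<le> q ^ m0" using False assms by (intro power_increasing) auto
    finally have "a * (q * y) ^ m \<le> a * q ^ m0" using assms by (simp add: mult_left_mono)
    moreover have "0 \<le> q ^ m" using assms by simp
    ultimately show ?thesis by linarith
  qed
  then show ?thesis by blast
qed


lemma geom_sum_le: fixes r :: real assumes "1 < r" shows "(\<Sum>k\<le>m. r ^ k) \<le> r / (r - 1) * r ^ m"
proof -
  have "(\<Sum>k\<le>m. r ^ k) = (\<Sum>k<Suc m. r ^ k)" by (simp add: lessThan_Suc_atMost)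
  also have "\<dots> = (r ^ Suc m - 1) / (r - 1)" by (rule geometric_sum) (use assms in simp)
  also have "\<dots> \<le> r ^ Suc m / (r - 1)" using assms by (intro divide_right_mono) auto
  also have "\<dots> = r / (r - 1) * r ^ m" by simp
  finally show ?thesis .
qed

lemma Csum_conv:
  assumes AS: "arith_semigroup deg"
  shows "Csum deg n m = (\<Sum>k\<le>n. c0 deg k * int (bS deg (\<lambda>p. deg p \<le> m) (n-k)))"
proof -
  have "{g. adeg deg g = n \<and> (\<forall>x\<in>#g. \<not> deg x \<le> m)} = {g. adeg deg g = n \<and> dminus_gt deg g m}"
    by (auto simp: dminus_gt_def not_le)
  then show ?thesis using conv_I[OF AS, where n=n and S="\<lambda>p. deg p \<le> m"] by (simp add: Csum_def)
qed

lemma Msum_conv: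
  assumes AS: "arith_semigroup deg"
  shows "Msum deg n m = (\<Sum>k\<le>n. Csum deg k m)"
proof -
  have e: "{g. adeg deg g \<le> n \<and> dminus_gt deg g m} = (\<Union>k\<le>n. {g. adeg deg g = k \<and> dminus_gt deg g m})"
    by auto
  have "Msum deg n m = (\<Sum>k\<le>n. \<Sum>g\<in>{g. adeg deg g = k \<and> dminus_gt deg g m}. amu g)"
    unfolding Msum_def e
    by (rule sum.UNION_disjoint) (auto intro: finite_subset[OF _ as_fin[OF AS]])
  then show ?thesis by (simp add: Csum_def)
qed

lemma main_from_c0:
  fixes deg :: "'p \<Rightarrow> nat" and q x B A :: real
  assumes AS: "arith_semigroup deg" and q: "1 < q" and A: "0 < A" "\<forall>k. real (Gcount deg k) \<le> A * q^k"
    and x: "1 < x" "x < q" and B: "\<forall>k. \<bar>real_of_int (c0 deg k)\<bar> \<le> B * x^k"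
  shows "\<exists>K. \<forall>n m. \<bar>real_of_int (Csum deg n m)\<bar> \<le> K * x^n * exp (q^m) \<and>
                    \<bar>real_of_int (Msum deg n m)\<bar> \<le> K * x^n * exp (q^m)"
proof -
  define y where "y = 1/x"
  have y: "0 < y" "y < 1" "1 < q*y" using x q by (auto simp: y_def field_simps)
  have xy: "x * y = 1" using x by (simp add: y_def)
  define A2 where "A2 = A * ((q*y) / (q*y - 1))"
  have A2: "0 \<le> A2" using A y by (simp add: A2_def)
  have stepa: "(\<Sum>p\<in>{p. deg p \<le> m}. y ^ deg p) \<le> A2 * (q*y)^m" for m
  proof -
    have "(\<Sum>p\<in>{p. deg p \<le> m}. y ^ deg p) = (\<Sum>g\<in>(\<lambda>p. {#p#}) ` {p. deg p \<le> m}. y ^ adeg deg g)"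
      by (subst sum.reindex) (auto simp: inj_on_def adeg_def)
    also have "\<dots> \<le> (\<Sum>g\<in>{g. adeg deg g \<le> m}. y ^ adeg deg g)"
      by (rule sum_mono2) (use as_fin_le[OF AS, of m] y in \<open>auto simp: adeg_def\<close>)
    also have "\<dots> = (\<Sum>k\<le>m. \<Sum>g\<in>{g. adeg deg g = k}. y ^ adeg deg g)"
    proof -
      have e: "{g. adeg deg g \<le> m} = (\<Union>k\<le>m. {g. adeg deg g = k})" by auto
      show ?thesis unfolding e by (rule sum.UNION_disjoint) (auto simp: as_fin[OF AS])
    qed
    also have "\<dots> = (\<Sum>k\<le>m. real (Gcount deg k) * y ^ k)"
      by (simp add: Gcount_def)
    also have "\<dots> \<le> (\<Sum>k\<le>m. A * (q*y) ^ k)"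
    proof (rule sum_mono)
      fix k assume "k \<in> {..m}"
      have "real (Gcount deg k) * y ^ k \<le> A * q ^ k * y ^ k"
        using A y by (intro mult_right_mono) auto
      then show "real (Gcount deg k) * y ^ k \<le> A * (q*y) ^ k" by (simp add: power_mult_distrib)
    qed
    also have "\<dots> = A * (\<Sum>k\<le>m. (q*y) ^ k)" by (simp add: sum_distrib_left)
    also have "\<dots> \<le> A * ((q*y) / (q*y - 1) * (q*y) ^ m)"
      using geom_sum_le[OF y(3), of m] A by (intro mult_left_mono) auto
    finally show ?thesis by (simp add: A2_def)
  qed
  obtain C3 where C3: "\<And>m. (A2 / (1 - y)) * (q*y)^m \<le> q^m + C3"
    using eventually_small_bound[of "A2 / (1 - y)" y q] A2 y q by auto
  have stepE: "(\<Sum>j\<le>n. real (bS deg (\<lambda>p. deg p \<le> m) j) * y ^ j) \<le> exp C3 * exp (q^m)" for n m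
  proof -
    define Pm where "Pm = {p. deg p \<le> m}"
    have finPm: "finite Pm" using as_fin_primes[OF AS] by (simp add: Pm_def)
    have Teq: "{g. set_mset g \<subseteq> Pm \<and> adeg deg g \<le> n} = (\<Union>j\<le>n. {g. adeg deg g = j \<and> (\<forall>x\<in>#g. deg x \<le> m)})"
      by (auto simp: Pm_def)
    have "(\<Sum>j\<le>n. real (bS deg (\<lambda>p. deg p \<le> m) j) * y ^ j) = (\<Sum>j\<le>n. \<Sum>g\<in>{g. adeg deg g = j \<and> (\<forall>x\<in>#g. deg x \<le> m)}. y ^ adeg deg g)"
      by (simp add: bS_def)
    also have "\<dots> = (\<Sum>g\<in>{g. set_mset g \<subseteq> Pm \<and> adeg deg g \<le> n}. y ^ adeg deg g)"
      unfolding Teq by (rule sum.UNION_disjoint[symmetric]) (auto intro: finite_subset[OF _ as_fin[OF AS]])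
    also have "\<dots> \<le> (\<Prod>p\<in>Pm. 1 / (1 - y ^ deg p))"
      by (rule prod_bound[OF AS finPm]) (use y in auto)
    also have "\<dots> \<le> (\<Prod>p\<in>Pm. exp (y ^ deg p / (1 - y)))"
    proof (rule prod_mono)
      fix p assume "p \<in> Pm"
      have d1: "1 \<le> deg p" using as_pos[OF AS, of p] by simp
      have u: "0 \<le> y ^ deg p" "y ^ deg p \<le> y" using y power_decreasing[OF d1, of y] by auto
      have u1: "y ^ deg p < 1" using u y by simp
      have "1 / (1 - y ^ deg p) = 1 + y ^ deg p / (1 - y ^ deg p)" using u1 by (simp add: field_simps)
      also have "\<dots> \<le> exp (y ^ deg p / (1 - y ^ deg p))" by (rule exp_ge_add_one_self)
      also have "\<dots> \<le> exp (y ^ deg p / (1 - y))"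
        using u y u1 by (simp add: frac_le)
      finally show "0 \<le> 1 / (1 - y ^ deg p) \<and> 1 / (1 - y ^ deg p) \<le> exp (y ^ deg p / (1 - y))"
        using u1 by simp
    qed
    also have "\<dots> = exp (\<Sum>p\<in>Pm. y ^ deg p / (1 - y))" by (simp add: exp_sum finPm)
    also have "\<dots> \<le> exp ((A2 / (1 - y)) * (q*y)^m)"
    proof -
      have "(\<Sum>p\<in>Pm. y ^ deg p / (1 - y)) = (\<Sum>p\<in>Pm. y ^ deg p) / (1 - y)" by (simp add: sum_divide_distrib)
      also have "\<dots> \<le> A2 * (q*y)^m / (1 - y)" using stepa[of m] y by (intro divide_right_mono) (auto simp: Pm_def)
      finally show ?thesis by simp
    qed
    also have "\<dots> \<le> exp (q^m + C3)" using C3[of m] by simp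
    finally show ?thesis by (simp add: exp_add mult.commute)
  qed
  have B0: "0 \<le> B" using B by (metis abs_ge_zero order_trans mult.right_neutral power_0)
  define K1 where "K1 = B * exp C3"
  have K1: "0 \<le> K1" using B0 by (simp add: K1_def)
  have stepC: "\<bar>real_of_int (Csum deg n m)\<bar> \<le> K1 * x^n * exp (q^m)" for n m
  proof -
    let ?b = "\<lambda>j. real (bS deg (\<lambda>p. deg p \<le> m) j)"
    have "\<bar>real_of_int (Csum deg n m)\<bar> = \<bar>\<Sum>k\<le>n. real_of_int (c0 deg k) * ?b (n-k)\<bar>"
      by (simp add: Csum_conv[OF AS])
    also have "\<dots> \<le> (\<Sum>k\<le>n. \<bar>real_of_int (c0 deg k)\<bar> * ?b (n-k))"
      by (rule order_trans[OF sum_abs]) (simp add: abs_mult)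
    also have "\<dots> \<le> (\<Sum>k\<le>n. B * x^k * ?b (n-k))"
      using B by (intro sum_mono mult_right_mono) auto
    also have "\<dots> = (\<Sum>k\<le>n. B * x^n * (?b (n-k) * y^(n-k)))"
    proof (intro sum.cong refl)
      fix k assume "k \<in> {..n}"
      then have "x^k = x^n * y^(n-k)" using x by (simp add: y_def power_diff power_divide)
      then show "B * x^k * ?b (n-k) = B * x^n * (?b (n-k) * y^(n-k))" by simp
    qed
    also have "\<dots> = B * x^n * (\<Sum>k\<le>n. ?b (n-k) * y^(n-k))" by (simp add: sum_distrib_left)
    also have "\<dots> = B * x^n * (\<Sum>j\<le>n. ?b j * y^j)"
      using sum_rev_atMost[of "\<lambda>j. ?b j * y^j" n] by simp
    also have "\<dots> \<le> B * x^n * (exp C3 * exp (q^m))"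
      using stepE[where n=n and m=m] B0 x by (intro mult_left_mono) auto
    finally show ?thesis by (simp add: K1_def algebra_simps)
  qed
  define K where "K = K1 * (x / (x - 1))"
  have KK1: "K1 \<le> K" using K1 x by (simp add: K_def field_simps mult_left_mono)
  have "\<bar>real_of_int (Csum deg n m)\<bar> \<le> K * x^n * exp (q^m) \<and>
        \<bar>real_of_int (Msum deg n m)\<bar> \<le> K * x^n * exp (q^m)" for n m
  proof
    have "K1 * x^n * exp (q^m) \<le> K * x^n * exp (q^m)"
      using KK1 x by (intro mult_right_mono) auto
    then show "\<bar>real_of_int (Csum deg n m)\<bar> \<le> K * x^n * exp (q^m)" using stepC[of n m] by linarith
    have "\<bar>real_of_int (Msum deg n m)\<bar> = \<bar>\<Sum>k\<le>n. real_of_int (Csum deg k m)\<bar>"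
      by (simp add: Msum_conv[OF AS])
    also have "\<dots> \<le> (\<Sum>k\<le>n. \<bar>real_of_int (Csum deg k m)\<bar>)" by (rule sum_abs)
    also have "\<dots> \<le> (\<Sum>k\<le>n. K1 * exp (q^m) * x^k)"
      using stepC by (intro sum_mono) (simp add: algebra_simps)
    also have "\<dots> = K1 * exp (q^m) * (\<Sum>k\<le>n. x^k)" by (simp add: sum_distrib_left)
    also have "\<dots> \<le> K1 * exp (q^m) * (x / (x - 1) * x ^ n)"
      using geom_sum_le[OF x(1), of n] K1 by (intro mult_left_mono) auto
    also have "\<dots> = K * x^n * exp (q^m)" by (simp add: K_def)
    finally show "\<bar>real_of_int (Msum deg n m)\<bar> \<le> K * x^n * exp (q^m)" .
  qed
  then show ?thesis by blast
qed



lemma radius_bound: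
  fixes f :: "complex fps"
  assumes b: "0 < b" and bd: "\<And>n. norm (f $ n) \<le> A * b^n"
  shows "fps_conv_radius f \<ge> ereal (1/b)"
  unfolding fps_conv_radius_def
proof (rule conv_radius_geI_ex')
  fix r :: real assume r: "0 < r" "ereal r < ereal (1/b)"
  then have br: "0 \<le> b * r" "b * r < 1" using b by (auto simp: field_simps)
  show "summable (\<lambda>n. f $ n * of_real r ^ n)"
  proof (rule summable_comparison_test)
    show "\<exists>N. \<forall>n\<ge>N. norm (f $ n * of_real r ^ n) \<le> A * (b * r) ^ n"
    proof (intro exI allI impI)
      fix n :: nat
      have "norm (f $ n * of_real r ^ n) = norm (f $ n) * r ^ n" using r by (simp add: norm_mult norm_power)
      also have "\<dots> \<le> A * b^n * r^n" using bd[of n] r by (intro mult_right_mono) auto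
      finally show "norm (f $ n * of_real r ^ n) \<le> A * (b * r) ^ n" by (simp add: power_mult_distrib mult.assoc)
    qed
    show "summable (\<lambda>n. A * (b * r) ^ n)" using br by (intro summable_mult summable_geometric) simp
  qed
qed

definition Gf :: "('p \<Rightarrow> nat) \<Rightarrow> complex fps" where "Gf deg = Abs_fps (\<lambda>n. of_nat (Gcount deg n))"
definition Cf :: "('p \<Rightarrow> nat) \<Rightarrow> complex fps" where "Cf deg = Abs_fps (\<lambda>n. of_int (c0 deg n))"
definition Ef :: "('p \<Rightarrow> nat) \<Rightarrow> real \<Rightarrow> real \<Rightarrow> complex fps" where
  "Ef deg c q = Abs_fps (\<lambda>n. of_real (real (Gcount deg n) - c * q^n))"
definition Pf :: "real \<Rightarrow> complex fps" where "Pf q = 1 - fps_const (of_real q) * fps_X"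
definition Hf :: "('p \<Rightarrow> nat) \<Rightarrow> real \<Rightarrow> real \<Rightarrow> complex fps" where
  "Hf deg c q = fps_const (of_real c) + Pf q * Ef deg c q"
definition Lf :: "('p \<Rightarrow> nat) \<Rightarrow> complex fps" where
  "Lf deg = Abs_fps (\<lambda>k. of_real (real (Lam deg k) / real k))"

lemma G0: assumes AS: "arith_semigroup deg" shows "Gcount deg 0 = 1"
proof -
  have "{g. adeg deg g = 0} = {{#}}" using adeg_0_iff[OF AS] by auto
  then show ?thesis by (simp add: Gcount_def)
qed

lemma bS_True: "bS deg (\<lambda>_. True) j = Gcount deg j"
  by (simp add: bS_def Gcount_def)

lemma c0_conv:
  assumes AS: "arith_semigroup deg"
  shows "(\<Sum>k\<le>n. c0 deg k * int (Gcount deg (n-k))) = (if n = 0 then 1 else 0)"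
proof -
  have "(\<Sum>k\<le>n. c0 deg k * int (Gcount deg (n-k))) = (\<Sum>g\<in>{g. adeg deg g = n \<and> (\<forall>x\<in>#g. \<not> True)}. amu g)"
    using conv_I[OF AS, where n=n and S="\<lambda>_. True"] by (simp add: bS_True)
  also have "{g. adeg deg g = n \<and> (\<forall>x\<in>#g. \<not> True)} = (if n = 0 then {{#}} else {})"
    using adeg_0_iff[OF AS] by auto
  finally show ?thesis by (simp add: amu_def)
qed

lemma CG1: assumes AS: "arith_semigroup deg" shows "Cf deg * Gf deg = 1"
proof (rule fps_ext)
  fix n
  have "(Cf deg * Gf deg) $ n = (\<Sum>i=0..n. of_int (c0 deg i) * of_nat (Gcount deg (n - i)))"
    by (simp add: fps_mult_nth Cf_def Gf_def)
  also have "\<dots> = of_int (\<Sum>k\<le>n. c0 deg k * int (Gcount deg (n-k)))"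
    by (simp add: atLeast0AtMost)
  also have "\<dots> = (1::complex fps) $ n" by (simp add: c0_conv[OF AS])
  finally show "(Cf deg * Gf deg) $ n = (1::complex fps) $ n" .
qed

lemma c0_le_G: "\<bar>c0 deg k\<bar> \<le> int (Gcount deg k)"
proof -
  have "\<bar>c0 deg k\<bar> \<le> (\<Sum>g\<in>{g. adeg deg g = k}. \<bar>amu g\<bar>)" unfolding c0_def by (rule sum_abs)
  also have "\<dots> \<le> (\<Sum>g\<in>{g. adeg deg g = k}. 1)" by (intro sum_mono) (simp add: amu_def)
  also have "\<dots> = int (Gcount deg k)" by (simp add: Gcount_def)
  finally show ?thesis .
qed

lemma PG_H:
  assumes AS: "arith_semigroup deg"
  shows "Pf q * Gf deg = Hf deg c q"
proof (rule fps_ext)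
  fix n
  have P: "Pf q * F = F - fps_const (of_real q) * (fps_X * F)" for F :: "complex fps"
    by (simp add: Pf_def algebra_simps)
  show "(Pf q * Gf deg) $ n = Hf deg c q $ n"
  proof (cases n)
    case 0 then show ?thesis by (simp add: P Hf_def Gf_def Ef_def)
  next
    case (Suc k)
    then show ?thesis by (simp add: P Hf_def Gf_def Ef_def algebra_simps)
  qed
qed


lemma Lam_le: assumes AS: "arith_semigroup deg" shows "Lam deg k \<le> k * Gcount deg k"
proof (cases "k = 0")
  case True
  have "PJ deg 0 = {}" using as_pos[OF AS] by (auto simp: PJ_def)
  then show ?thesis using True by (simp add: Lam_def)
next
  case False
  have "Lam deg k = Lam deg k * Gcount deg (k - k)" by (simp add: G0[OF AS])
  also have "\<dots> \<le> (\<Sum>j\<in>{1..k}. Lam deg j * Gcount deg (k-j))"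
    by (rule member_le_sum) (use False in auto)
  also have "\<dots> = k * Gcount deg k" by (rule conv_II[OF AS, symmetric])
  finally show ?thesis .
qed

lemma deriv_identity:
  assumes AS: "arith_semigroup deg"
  shows "fps_deriv (Gf deg) = fps_deriv (Lf deg) * Gf deg"
proof (rule fps_ext)
  fix n
  have "fps_deriv (Lf deg) = Abs_fps (\<lambda>n. of_nat (Lam deg (Suc n)))"
    by (rule fps_ext) (simp add: fps_deriv_def Lf_def del: of_nat_Suc)
  then have "(fps_deriv (Lf deg) * Gf deg) $ n = (\<Sum>i=0..n. of_nat (Lam deg (Suc i)) * of_nat (Gcount deg (n - i)))"
    by (simp add: fps_mult_nth Gf_def)
  also have "\<dots> = of_nat (\<Sum>i=0..n. Lam deg (Suc i) * Gcount deg (Suc n - Suc i))" by simp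
  also have "(\<Sum>i=0..n. Lam deg (Suc i) * Gcount deg (Suc n - Suc i)) = (\<Sum>k\<in>{1..Suc n}. Lam deg k * Gcount deg (Suc n - k))"
    by (subst sum.shift_bounds_cl_Suc_ivl[symmetric]) simp
  also have "\<dots> = Suc n * Gcount deg (Suc n)" by (rule conv_II[OF AS, symmetric])
  finally have X: "(fps_deriv (Lf deg) * Gf deg) $ n = of_nat (Suc n * Gcount deg (Suc n))" .
  show "fps_deriv (Gf deg) $ n = (fps_deriv (Lf deg) * Gf deg) $ n"
    unfolding X by (simp add: Gf_def algebra_simps)
qed

lemma er: "(a::real) < b \<Longrightarrow> ereal b \<le> R \<Longrightarrow> ereal a < R"
  by (rule less_le_trans[of _ "ereal b"]) simp_all

lemma radius_cX: "fps_conv_radius (fps_const (a::complex) * fps_X) = \<infinity>"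
proof -
  have "fps_conv_radius (fps_const a * fps_X) \<ge> min \<infinity> \<infinity>"
    using fps_conv_radius_mult[of "fps_const a" fps_X] by simp
  then show ?thesis by simp
qed

context
  fixes deg :: "'p \<Rightarrow> nat" and c q A \<eta>0 K :: real
  assumes AS: "arith_semigroup deg" and c: "0 < c" and q: "1 < q" and A: "0 < A"
    and Gb: "\<And>k. real (Gcount deg k) \<le> A * q^k"
    and e0: "0 \<le> \<eta>0" "\<eta>0 < 1"
    and Kb: "\<And>n. \<bar>real (Gcount deg n) - c * q ^ n\<bar> \<le> K * q powr (\<eta>0 * real n)"
begin

definition R0 :: real where "R0 = 1 / q powr \<eta>0"

lemma R0_gt: "1 / q < R0"
proof -
  have "q powr \<eta>0 < q powr 1" using q e0 by (intro powr_less_mono) auto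
  then show ?thesis using q by (simp add: R0_def frac_less2)
qed

lemma radius_G: "fps_conv_radius (Gf deg) \<ge> ereal (1/q)"
  by (rule radius_bound[of q _ A]) (use q Gb in \<open>auto simp: Gf_def\<close>)

lemma radius_C: "fps_conv_radius (Cf deg) \<ge> ereal (1/q)"
proof (rule radius_bound[of q _ A])
  fix n
  have "\<bar>real_of_int (c0 deg n)\<bar> \<le> real (Gcount deg n)" using c0_le_G[of deg n] by linarith
  then show "norm (Cf deg $ n) \<le> A * q^n" using Gb[of n] by (simp add: Cf_def)
qed (use q in auto)

lemma radius_L: "fps_conv_radius (Lf deg) \<ge> ereal (1/q)"
proof (rule radius_bound[of q _ A])
  fix n
  have "real (Lam deg n) / real n \<le> real (Gcount deg n)"
  proof (cases "n = 0")
    case False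
    then show ?thesis using Lam_le[OF AS, of n] by (simp add: field_simps) (metis of_nat_le_iff of_nat_mult mult.commute)
  qed simp
  moreover have "norm (Lf deg $ n) = real (Lam deg n) / real n"
    unfolding Lf_def fps_nth_Abs_fps norm_of_real by simp
  ultimately show "norm (Lf deg $ n) \<le> A * q^n" using Gb[of n] by linarith
qed (use q in auto)

lemma radius_E: "fps_conv_radius (Ef deg c q) \<ge> ereal R0"
proof -
  have qe: "0 < q powr \<eta>0" using q by simp
  have "fps_conv_radius (Ef deg c q) \<ge> ereal (1 / q powr \<eta>0)"
  proof (rule radius_bound[OF qe, of _ "\<bar>K\<bar>"])
    fix n
    have "(q powr \<eta>0) ^ n = q powr (\<eta>0 * real n)"
      using q by (simp add: powr_realpow[symmetric] powr_powr)
    moreover have "K * q powr (\<eta>0 * real n) \<le> \<bar>K\<bar> * q powr (\<eta>0 * real n)"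
      by (intro mult_right_mono) auto
    moreover have "norm (Ef deg c q $ n) = \<bar>real (Gcount deg n) - c * q ^ n\<bar>"
      unfolding Ef_def fps_nth_Abs_fps norm_of_real ..
    ultimately show "norm (Ef deg c q $ n) \<le> \<bar>K\<bar> * (q powr \<eta>0) ^ n"
      using Kb[of n] by simp
  qed
  then show ?thesis by (simp add: R0_def)
qed

lemma radius_P: "fps_conv_radius (Pf q) = \<infinity>"
proof -
  have "fps_conv_radius (fps_const (complex_of_real q) * fps_X) \<ge> min \<infinity> \<infinity>"
    using fps_conv_radius_mult[of "fps_const (complex_of_real q)" fps_X] by simp
  then have "fps_conv_radius (fps_const (complex_of_real q) * fps_X) = \<infinity>" by simp
  then have "fps_conv_radius (Pf q) \<ge> min \<infinity> \<infinity>"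
    using fps_conv_radius_diff[of 1 "fps_const (complex_of_real q) * fps_X"] by (simp add: Pf_def)
  then show ?thesis by simp
qed

lemma radius_H: "fps_conv_radius (Hf deg c q) \<ge> ereal R0"
proof -
  have "fps_conv_radius (Pf q * Ef deg c q) \<ge> min (fps_conv_radius (Pf q)) (fps_conv_radius (Ef deg c q))"
    by (rule fps_conv_radius_mult)
  then have 1: "fps_conv_radius (Pf q * Ef deg c q) \<ge> ereal R0" using radius_E radius_P by simp
  have "fps_conv_radius (Hf deg c q) \<ge> min (fps_conv_radius (fps_const (complex_of_real c))) (fps_conv_radius (Pf q * Ef deg c q))"
    unfolding Hf_def by (rule fps_conv_radius_add)
  then show ?thesis using 1 by simp
qed

lemma eval_P: "eval_fps (Pf q) z = 1 - of_real q * z"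
proof -
  have "eval_fps (fps_const (complex_of_real q) * fps_X) z = of_real q * z"
    by (subst eval_fps_mult) auto
  then show ?thesis unfolding Pf_def using radius_cX by (subst eval_fps_diff) (auto simp: radius_P)
qed

lemma radius_PE: "fps_conv_radius (Pf q * Ef deg c q) \<ge> ereal R0"
proof -
  have "fps_conv_radius (Pf q * Ef deg c q) \<ge> min (fps_conv_radius (Pf q)) (fps_conv_radius (Ef deg c q))"
    by (rule fps_conv_radius_mult)
  then show ?thesis using radius_E radius_P by simp
qed

lemma eval_H: assumes "norm z < R0"
  shows "eval_fps (Hf deg c q) z = of_real c + (1 - of_real q * z) * eval_fps (Ef deg c q) z"
proof -
  have r: "ereal (norm z) < fps_conv_radius (Pf q * Ef deg c q)" "ereal (norm z) < fps_conv_radius (Ef deg c q)"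
    using er[OF assms radius_PE] er[OF assms radius_E] by auto
  have "eval_fps (Hf deg c q) z = eval_fps (fps_const (of_real c)) z + eval_fps (Pf q * Ef deg c q) z"
    unfolding Hf_def using r by (subst eval_fps_add) auto
  also have "eval_fps (Pf q * Ef deg c q) z = eval_fps (Pf q) z * eval_fps (Ef deg c q) z"
    using r radius_P by (subst eval_fps_mult) auto
  finally show ?thesis by (simp add: eval_P)
qed

lemma eval_H_G: assumes "norm z < 1/q"
  shows "eval_fps (Hf deg c q) z = (1 - of_real q * z) * eval_fps (Gf deg) z"
proof -
  have r: "ereal (norm z) < fps_conv_radius (Gf deg)"
    using er[OF assms radius_G] .
  have "eval_fps (Hf deg c q) z = eval_fps (Pf q * Gf deg) z" using PG_H[OF AS, where q=q and c=c] by simp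
  also have "\<dots> = eval_fps (Pf q) z * eval_fps (Gf deg) z"
    using r radius_P by (subst eval_fps_mult) auto
  finally show ?thesis by (simp add: eval_P)
qed

lemma eval_CG: assumes "norm z < 1/q"
  shows "eval_fps (Cf deg) z * eval_fps (Gf deg) z = 1"
proof -
  have r: "ereal (norm z) < fps_conv_radius (Gf deg)" "ereal (norm z) < fps_conv_radius (Cf deg)"
    using er[OF assms radius_G] er[OF assms radius_C] by auto
  have "eval_fps (Cf deg) z * eval_fps (Gf deg) z = eval_fps (Cf deg * Gf deg) z"
    using r by (subst eval_fps_mult) auto
  then show ?thesis by (simp add: CG1[OF AS])
qed

lemma Z_exp: assumes "norm z < 1/q"
  shows "eval_fps (Gf deg) z = exp (eval_fps (Lf deg) z)"
proof -
  define S where "S = ball (0::complex) (1/q)"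
  define Q where "Q = (\<lambda>z. eval_fps (Gf deg) z * exp (- eval_fps (Lf deg) z))"
  have "\<exists>C. \<forall>x\<in>S. Q x = C"
  proof (rule has_field_derivative_zero_constant)
    show "convex S" by (simp add: S_def)
    fix x assume x: "x \<in> S"
    have nx: "norm x < 1/q" using x by (simp add: S_def)
    have r: "ereal (norm x) < fps_conv_radius (Gf deg)" "ereal (norm x) < fps_conv_radius (Lf deg)"
      using er[OF nx radius_G] er[OF nx radius_L] by auto
    have r2: "ereal (norm x) < fps_conv_radius (fps_deriv (Lf deg))"
      using r(2) fps_conv_radius_deriv[of "Lf deg"] by (auto intro: less_le_trans)
    have dG: "(eval_fps (Gf deg) has_field_derivative eval_fps (fps_deriv (Gf deg)) x) (at x within S)"
      by (rule has_field_derivative_eval_fps[OF r(1)])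
    have dL: "(eval_fps (Lf deg) has_field_derivative eval_fps (fps_deriv (Lf deg)) x) (at x within S)"
      by (rule has_field_derivative_eval_fps[OF r(2)])
    have e: "eval_fps (fps_deriv (Gf deg)) x = eval_fps (fps_deriv (Lf deg)) x * eval_fps (Gf deg) x"
      unfolding deriv_identity[OF AS] using r r2 by (subst eval_fps_mult) auto
    have dE: "((\<lambda>z. exp (- eval_fps (Lf deg) z)) has_field_derivative (exp (- eval_fps (Lf deg) x) * (- eval_fps (fps_deriv (Lf deg)) x))) (at x within S)"
      by (rule DERIV_chain2[OF DERIV_exp DERIV_minus[OF dL]])
    have "(Q has_field_derivative (eval_fps (fps_deriv (Gf deg)) x * exp (- eval_fps (Lf deg) x) +
            (exp (- eval_fps (Lf deg) x) * (- eval_fps (fps_deriv (Lf deg)) x)) * eval_fps (Gf deg) x)) (at x within S)"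
      unfolding Q_def by (rule DERIV_mult[OF dG dE])
    then show "(Q has_field_derivative 0) (at x within S)" by (simp add: e algebra_simps)
  qed
  then obtain C where C: "\<And>x. x \<in> S \<Longrightarrow> Q x = C" by blast
  have "0 \<in> S" using q by (simp add: S_def)
  then have "C = 1" using C[of 0] by (simp add: Q_def eval_fps_at_0 Gf_def Lf_def G0[OF AS])
  moreover have "z \<in> S" using assms by (simp add: S_def)
  ultimately have "Q z = 1" using C by simp
  then show ?thesis by (simp add: Q_def exp_minus field_simps)
qed

lemma alg341: "(s::real) > 0 \<Longrightarrow> a^3 * (b/s)^4 * s * d / X = a^3 * b^4 * d / (s^3 * X)"
  by (simp add: power_divide field_simps eval_nat_numeral)

lemma Lf_nth: "Lf deg $ k = of_real (real (Lam deg k) / real k)"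
  by (simp only: Lf_def fps_nth_Abs_fps)

lemma Z341:
  fixes t :: real and w :: complex
  assumes t: "0 < t" "t < 1" and w: "norm w = 1"
  shows "1 \<le> norm (eval_fps (Gf deg) (of_real (t/q) * w^0))^3 * norm (eval_fps (Gf deg) (of_real (t/q) * w^1))^4
              * norm (eval_fps (Gf deg) (of_real (t/q) * w^2))"
proof -
  define r where "r = t/q"
  have r: "0 < r" "r < 1/q" using t q by (auto simp: r_def field_simps)
  define z where "z = (\<lambda>j::nat. complex_of_real r * w^j)"
  have nz: "norm (z j) < 1/q" for j using r w by (simp add: z_def norm_mult norm_power)
  define L where "L = eval_fps (Lf deg)"
  have sL: "(\<lambda>k. Lf deg $ k * (z j)^k) sums L (z j)" for j
    unfolding L_def by (rule sums_eval_fps[OF er[OF nz radius_L]])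
  have nG: "norm (eval_fps (Gf deg) (z j)) = exp (Re (L (z j)))" for j
    using Z_exp[OF nz[of j]] by (simp add: L_def)
  define S where "S = 3 * Re (L (z 0)) + 4 * Re (L (z 1)) + Re (L (z 2))"
  have sS: "(\<lambda>k. 3 * Re (Lf deg $ k * (z 0)^k) + 4 * Re (Lf deg $ k * (z 1)^k) + Re (Lf deg $ k * (z 2)^k)) sums S"
    unfolding S_def by (intro sums_add sums_mult sums_Re sL)
  have tm: "0 \<le> 3 * Re (Lf deg $ k * (z 0)^k) + 4 * Re (Lf deg $ k * (z 1)^k) + Re (Lf deg $ k * (z 2)^k)" for k
  proof -
    define u where "u = w^k"
    have nu: "norm u = 1" using w by (simp add: u_def norm_power)
    define a where "a = real (Lam deg k) / real k * r^k"
    have a: "0 \<le> a" using r by (simp add: a_def)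
    have zk: "(z j)^k = complex_of_real (r^k) * u^j" for j
      by (simp add: z_def u_def power_mult_distrib power_mult[symmetric] mult.commute)
    have "3 * Re (Lf deg $ k * (z 0)^k) + 4 * Re (Lf deg $ k * (z 1)^k) + Re (Lf deg $ k * (z 2)^k)
          = a * (3 + 4 * Re u + Re (u^2))"
      by (simp add: zk Lf_nth a_def algebra_simps)
    moreover have "0 \<le> 3 + 4 * Re u + Re (u^2)"
    proof -
      have "(Re u)^2 + (Im u)^2 = 1" using cmod_power2[of u] nu by simp
      moreover have "Re (u^2) = (Re u)^2 - (Im u)^2" by (simp add: power2_eq_square)
      ultimately have "3 + 4 * Re u + Re (u^2) = 2 * (1 + Re u)^2" by (simp add: power2_eq_square algebra_simps)
      then show ?thesis by simp
    qed
    ultimately show ?thesis using a by simp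
  qed
  have "0 \<le> S" using sums_le[OF tm sums_zero sS] .
  have "norm (eval_fps (Gf deg) (z 0))^3 * norm (eval_fps (Gf deg) (z 1))^4 * norm (eval_fps (Gf deg) (z 2)) = exp S"
    unfolding nG S_def by (simp add: exp_add exp_of_nat_mult[symmetric])
  also have "\<dots> \<ge> 1" using \<open>0 \<le> S\<close> by simp
  finally show ?thesis by (simp add: z_def r_def)
qed

lemma H_circle:
  fixes w :: complex
  assumes w: "norm w = 1" "w^2 \<noteq> 1"
  shows "eval_fps (Hf deg c q) (w / of_real q) \<noteq> 0"
proof
  assume H0: "eval_fps (Hf deg c q) (w / of_real q) = 0"
  define H where "H = eval_fps (Hf deg c q)"
  define P where "P = (\<lambda>j::nat. w^j / complex_of_real q)"
  have nP: "norm (P j) = 1/q" for j using w q by (simp add: P_def norm_divide norm_power)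
  have rH: "ereal (norm z) < fps_conv_radius (Hf deg c q)" if "norm z \<le> 1/q" for z
  proof -
    have "norm z < R0" using R0_gt that by linarith
    then show ?thesis using er[OF _ radius_H] by blast
  qed
  have contH: "isCont H (P j)" for j
    unfolding H_def by (rule continuous_eval_fps[OF rH]) (simp add: nP)
  have w1: "w \<noteq> 1" using w(2) by auto
  define D0 where "D0 = eval_fps (fps_deriv (Hf deg c q)) (P 1)"
  have dH: "(H has_field_derivative D0) (at (1 * P 1))"
    unfolding H_def D0_def using has_field_derivative_eval_fps[OF rH[of "P 1"]] nP by simp
  define hc where "hc = (\<lambda>s. H (s * P 1))"
  have dh: "(hc has_field_derivative D0 * P 1) (at 1)"
    unfolding hc_def
    by (rule DERIV_chain2[where g="\<lambda>s. s * P 1" and x=1, OF dH]) (auto intro!: derivative_eq_intros)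
  have hc1: "hc 1 = 0" using H0 by (simp add: hc_def H_def P_def)
  have lim1: "((\<lambda>s. hc s / (s - 1)) \<longlongrightarrow> D0 * P 1) (at 1)"
    using dh hc1 unfolding has_field_derivative_iff by simp
  have ev01: "eventually (\<lambda>t::real. t \<in> {0<..<1}) (at_left 1)"
    by (rule eventually_at_left_real) simp
  have tof: "((\<lambda>t::real. complex_of_real t) \<longlongrightarrow> 1) (at_left 1)"
    using tendsto_of_real[OF tendsto_ident_at[of "1::real" "{..<1}"]] by simp
  have fl: "filterlim (\<lambda>t::real. complex_of_real t) (at 1) (at_left 1)"
    unfolding filterlim_at using tof ev01 by (auto elim!: eventually_mono)
  have lim2: "((\<lambda>t. hc (of_real t) / (of_real t - 1)) \<longlongrightarrow> D0 * P 1) (at_left 1)"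
    by (rule filterlim_compose[OF lim1 fl])
  have limH: "((\<lambda>t. H (of_real t * P j)) \<longlongrightarrow> H (P j)) (at_left 1)" for j
  proof -
    have "((\<lambda>t. complex_of_real t * P j) \<longlongrightarrow> 1 * P j) (at_left 1)"
      by (intro tendsto_mult tof tendsto_const)
    then show ?thesis using isCont_tendsto_compose[OF contH] by simp
  qed
  define \<phi> where "\<phi> = (\<lambda>t. norm (H (of_real t * P 0))^3 * norm (hc (of_real t) / (of_real t - 1))^4 * (1 - t)
                 * norm (H (of_real t * P 2)) / (norm (1 - of_real t * w)^4 * norm (1 - of_real t * w^2)))"
  have "(\<phi> \<longlongrightarrow> norm (H (P 0))^3 * norm (D0 * P 1)^4 * (1 - 1) * norm (H (P 2)) / (norm (1 - 1 * w)^4 * norm (1 - 1 * w^2))) (at_left 1)"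
    unfolding \<phi>_def
    using w1 w(2)
    by (intro tendsto_intros limH lim2 tof) (auto simp: right_diff_distrib)
  then have lim\<phi>: "(\<phi> \<longlongrightarrow> 0) (at_left 1)" by simp
  then have ev1: "eventually (\<lambda>t. \<phi> t < 1) (at_left 1)"
    by (rule order_tendstoD(2)) simp
  have ge: "1 \<le> \<phi> t" if t: "0 < t" "t < 1" for t
  proof -
    define z where "z = (\<lambda>j. complex_of_real t * P j)"
    have zz: "complex_of_real (t/q) * w^j = z j" for j using q by (simp add: z_def P_def field_simps)
    have nz: "norm (z j) < 1/q" for j using t q nP by (simp add: z_def norm_mult divide_strict_right_mono)
    have qz: "of_real q * z j = of_real t * w^j" for j using q by (simp add: z_def P_def field_simps)
    define N where "N = (\<lambda>j::nat. norm (1 - of_real t * w^j))"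
    have Npos: "0 < N j" for j
    proof -
      have "norm (of_real t * w^j) < 1" using t w by (simp add: norm_mult norm_power)
      then have "of_real t * w^j \<noteq> 1" by auto
      then show ?thesis by (simp add: N_def)
    qed
    have N0: "N 0 = 1 - t"
    proof -
      have "1 - complex_of_real t = complex_of_real (1 - t)" by simp
      then show ?thesis using t unfolding N_def by (simp only: power_0 mult_1_right norm_of_real)
    qed
    have GH: "norm (eval_fps (Gf deg) (z j)) = norm (H (z j)) / N j" for j
    proof -
      have "H (z j) = (1 - of_real t * w^j) * eval_fps (Gf deg) (z j)"
        using eval_H_G[OF nz[of j]] by (simp add: H_def qz)
      then have "norm (H (z j)) = N j * norm (eval_fps (Gf deg) (z j))" by (simp only: N_def norm_mult)
      then show ?thesis using Npos[of j] by (simp add: field_simps)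
    qed
    have "1 \<le> norm (eval_fps (Gf deg) (z 0))^3 * norm (eval_fps (Gf deg) (z 1))^4 * norm (eval_fps (Gf deg) (z 2))"
      using Z341[OF t w(1)] by (simp only: zz)
    also have "\<dots> = norm (H (z 0))^3 * norm (H (z 1))^4 * norm (H (z 2)) / ((N 0)^3 * (N 1)^4 * N 2)"
      by (simp add: GH power_divide)
    also have "\<dots> = \<phi> t"
    proof -
      have hz: "norm (hc (of_real t) / (of_real t - 1)) = norm (H (z 1)) / (1 - t)"
        using t by (simp add: hc_def z_def norm_divide) (metis abs_of_pos diff_gt_0_iff_gt norm_minus_commute norm_of_real of_real_1 of_real_diff)
      have "\<phi> t = norm (H (z 0))^3 * (norm (H (z 1)) / (1 - t))^4 * (1 - t) * norm (H (z 2)) / ((N 1)^4 * N 2)"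
        unfolding \<phi>_def hz by (simp add: z_def N_def)
      also have "\<dots> = norm (H (z 0))^3 * norm (H (z 1))^4 * norm (H (z 2)) / ((1 - t)^3 * ((N 1)^4 * N 2))"
        by (rule alg341) (use t in simp)
      finally show ?thesis by (simp add: N0 mult.assoc)
    qed
    finally show ?thesis .
  qed
  have "eventually (\<lambda>t. False) (at_left (1::real))"
    using ev1 ev01 by eventually_elim (use ge in force)
  then show False using eventually_happens[of "\<lambda>_. False"] by simp
qed

lemma H_nonzero_closed:
  assumes Hm: "eval_fps (Hf deg c q) (complex_of_real (-1/q)) \<noteq> 0"
    and z: "norm z \<le> 1/q"
  shows "eval_fps (Hf deg c q) z \<noteq> 0"
proof (cases "norm z < 1/q")
  case True
  have "eval_fps (Cf deg) z * eval_fps (Gf deg) z = 1" by (rule eval_CG[OF True])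
  then have G: "eval_fps (Gf deg) z \<noteq> 0" by auto
  have "norm (of_real q * z) < 1" using True q by (simp add: norm_mult field_simps)
  then have "1 - of_real q * z \<noteq> 0" by auto
  then show ?thesis using eval_H_G[OF True] G by simp
next
  case False
  then have nz: "norm z = 1/q" using z by simp
  define w where "w = of_real q * z"
  have nw: "norm w = 1" using nz q by (simp add: w_def norm_mult)
  have zw: "z = w / of_real q" using q by (simp add: w_def)
  show ?thesis
  proof (cases "w^2 = 1")
    case False
    then show ?thesis using H_circle[OF nw False] zw by simp
  next
    case True
    then have "w = 1 \<or> w = -1" by (simp add: power2_eq_1_iff)
    then show ?thesis
    proof
      assume "w = 1"
      then have z1: "z = of_real (1/q)" using zw by simp
      have "norm z < R0" using nz R0_gt by simp
      then have "eval_fps (Hf deg c q) z = of_real c" using eval_H[of z] q by (simp add: z1)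
      then show ?thesis using c by simp
    next
      assume "w = -1"
      then have "z = complex_of_real (-1/q)" using zw by simp
      then show ?thesis using Hm by simp
    qed
  qed
qed

lemma rho_exists:
  assumes Hm: "eval_fps (Hf deg c q) (complex_of_real (-1/q)) \<noteq> 0"
  shows "\<exists>\<rho>. 1/q < \<rho> \<and> \<rho> < R0 \<and> (\<forall>z. norm z < \<rho> \<longrightarrow> eval_fps (Hf deg c q) z \<noteq> 0)"
proof -
  define R1 where "R1 = (1/q + R0) / 2"
  have R1: "1/q < R1" "R1 < R0" using R0_gt by (auto simp: R1_def)
  define H where "H = eval_fps (Hf deg c q)"
  have cont: "continuous_on (cball 0 R1) H"
  proof (rule continuous_at_imp_continuous_on, rule ballI)
    fix z :: complex assume "z \<in> cball 0 R1"
    then have "norm z < R0" using R1 by auto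
    then show "isCont H z" unfolding H_def by (intro continuous_eval_fps er[OF _ radius_H])
  qed
  define S where "S = {z \<in> cball 0 R1. H z = 0}"
  have "closed S" unfolding S_def by (intro continuous_closed_preimage_constant cont) simp
  moreover have "bounded S" by (rule bounded_subset[OF bounded_cball[of 0 R1]]) (auto simp: S_def)
  ultimately have cS: "compact S" by (simp add: compact_eq_bounded_closed)
  show ?thesis
  proof (cases "S = {}")
    case True
    have "\<forall>z. norm z < R1 \<longrightarrow> eval_fps (Hf deg c q) z \<noteq> 0"
      using True by (auto simp: S_def H_def)
    then show ?thesis using R1 by blast
  next
    case False
    obtain z0 where z0: "z0 \<in> S" "\<And>y. y \<in> S \<Longrightarrow> norm z0 \<le> norm y"
      using continuous_attains_inf[OF cS False, of norm] by (auto intro: continuous_intros)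
    have "1/q < norm z0"
    proof (rule ccontr)
      assume "\<not> 1/q < norm z0"
      then have "H z0 \<noteq> 0" using H_nonzero_closed[OF Hm] by (simp add: H_def)
      then show False using z0 by (simp add: S_def)
    qed
    moreover have "norm z0 < R0" using z0 R1 by (auto simp: S_def)
    moreover have "\<forall>z. norm z < norm z0 \<longrightarrow> eval_fps (Hf deg c q) z \<noteq> 0"
    proof (intro allI impI notI)
      fix z :: complex assume a: "norm z < norm z0" "eval_fps (Hf deg c q) z = 0"
      have "norm z0 \<le> R1" using z0 by (auto simp: S_def)
      then have "z \<in> S" using a by (auto simp: S_def H_def)
      then show False using z0(2)[of z] a by simp
    qed
    ultimately show ?thesis by blast
  qed
qed

lemma c0_bound_ctx:
  assumes Hm: "eval_fps (Hf deg c q) (complex_of_real (-1/q)) \<noteq> 0"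
  shows "\<exists>x B. 1 < x \<and> x < q \<and> (\<forall>k. \<bar>real_of_int (c0 deg k)\<bar> \<le> B * x^k)"
proof -
  obtain \<rho> where \<rho>: "1/q < \<rho>" "\<rho> < R0" "\<And>z. norm z < \<rho> \<Longrightarrow> eval_fps (Hf deg c q) z \<noteq> 0"
    using rho_exists[OF Hm] by blast
  define I where "I = inverse (Hf deg c q)"
  have "Hf deg c q $ 0 = (Pf q * Gf deg) $ 0" by (simp only: PG_H[OF AS, where q=q and c=c])
  also have "\<dots> = 1" by (simp add: Pf_def Gf_def G0[OF AS])
  finally have H00: "Hf deg c q $ 0 = 1" .
  have HI: "Hf deg c q * I = 1" unfolding I_def by (rule inverse_mult_eq_1') (simp add: H00)
  have CPI: "Cf deg = Pf q * I"
  proof -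
    have "Cf deg = Cf deg * (Hf deg c q * I)" by (simp add: HI)
    also have "\<dots> = Cf deg * (Pf q * Gf deg * I)" using PG_H[OF AS, where q=q and c=c] by simp
    also have "\<dots> = (Cf deg * Gf deg) * (Pf q * I)" by (simp add: ac_simps)
    finally show ?thesis by (simp add: CG1[OF AS])
  qed
  have "fps_conv_radius I \<ge> min (ereal \<rho>) (fps_conv_radius (Hf deg c q))"
    unfolding I_def by (rule fps_conv_radius_inverse) (use \<rho>(3) in auto)
  moreover have "fps_conv_radius (Hf deg c q) \<ge> ereal \<rho>"
    using radius_H \<rho>(2) by (meson ereal_less_eq(3) less_imp_le order_trans)
  ultimately have rI: "fps_conv_radius I \<ge> ereal \<rho>" by (simp add: min_def split: if_splits)
  have rC: "fps_conv_radius (Cf deg) \<ge> ereal \<rho>"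
    using fps_conv_radius_mult[of "Pf q" I] rI radius_P by (simp add: CPI)
  define \<rho>' where "\<rho>' = (1/q + min \<rho> 1) / 2"
  have q1: "1/q < 1" using q by simp
  have \<rho>': "1/q < \<rho>'" "\<rho>' < \<rho>" "\<rho>' < 1" using \<rho> q1 by (auto simp: \<rho>'_def min_def)
  have pos: "0 < \<rho>'" using \<rho>' q by (smt (verit) divide_pos_pos)
  have "norm (complex_of_real \<rho>') < \<rho>" using \<rho>' pos by simp
  then have sm: "summable (\<lambda>n. norm (Cf deg $ n * complex_of_real \<rho>' ^ n))"
    by (intro norm_summable_fps er[OF _ rC])
  define B where "B = (\<Sum>n. norm (Cf deg $ n * complex_of_real \<rho>' ^ n))"
  define x where "x = 1 / \<rho>'"
  have bd: "\<bar>real_of_int (c0 deg k)\<bar> \<le> B * x^k" for k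
  proof -
    have "(\<Sum>n\<in>{k}. norm (Cf deg $ n * complex_of_real \<rho>' ^ n)) \<le> B"
      unfolding B_def by (rule sum_le_suminf[OF sm]) auto
    then have "\<bar>real_of_int (c0 deg k)\<bar> * \<rho>' ^ k \<le> B"
      using pos by (simp add: Cf_def norm_mult norm_power)
    then show ?thesis using pos by (simp add: x_def power_divide field_simps)
  qed
  have "1 < x" "x < q" using \<rho>' pos q by (auto simp: x_def field_simps)
  then show ?thesis using bd by blast
qed

lemma Hm_from_f:
  assumes Zc: "Z_continuation deg q f r" and fne: "f (complex_of_real (-1/q)) \<noteq> 0"
  shows "eval_fps (Hf deg c q) (complex_of_real (-1/q)) \<noteq> 0"
proof -
  have r: "1/q < r" and holf: "f holomorphic_on (ball 0 r - {complex_of_real (1/q)})"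
    and sf: "\<And>z. norm z < 1/q \<Longrightarrow> (\<lambda>n. of_nat (Gcount deg n) * z ^ n) sums f z"
    using Zc unfolding Z_continuation_def by auto
  define U where "U = ball (0::complex) (min r R0) - {complex_of_real (1/q)}"
  have oU: "open U" by (simp add: U_def open_delete)
  have cU: "connected U" unfolding U_def by (rule connected_open_delete) auto
  have h1: "(\<lambda>z. (1 - of_real q * z) * f z) holomorphic_on U"
    by (intro holomorphic_intros holomorphic_on_subset[OF holf]) (auto simp: U_def)
  have h2: "eval_fps (Hf deg c q) holomorphic_on U"
  proof (rule holomorphic_on_eval_fps)
    show "U \<subseteq> eball 0 (fps_conv_radius (Hf deg c q))"
    proof
      fix z assume "z \<in> U"
      then have "norm z < R0" by (auto simp: U_def)
      then show "z \<in> eball 0 (fps_conv_radius (Hf deg c q))" using er[OF _ radius_H] by auto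
    qed
  qed
  have sub: "ball 0 (1/q) \<subseteq> U" using r R0_gt q by (auto simp: U_def norm_divide)
  have eq: "(1 - of_real q * z) * f z = eval_fps (Hf deg c q) z" if "z \<in> ball 0 (1/q)" for z
  proof -
    have nz: "norm z < 1/q" using that by simp
    have "(\<lambda>n. fps_nth (Gf deg) n * z ^ n) sums eval_fps (Gf deg) z"
      by (rule sums_eval_fps[OF er[OF nz radius_G]])
    then have "f z = eval_fps (Gf deg) z" using sf[OF nz] sums_unique2 by (simp add: Gf_def) blast
    then show ?thesis using eval_H_G[OF nz] by simp
  qed
  have z0: "complex_of_real (-1/q) \<in> U" using r R0_gt q by (auto simp: U_def norm_divide)
  have "(1 - of_real q * complex_of_real (-1/q)) * f (complex_of_real (-1/q)) = eval_fps (Hf deg c q) (complex_of_real (-1/q))"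
    by (rule analytic_continuation_open[OF _ oU _ cU sub h1 h2 eq z0]) (use q in auto)
  moreover have "(1 - of_real q * complex_of_real (-1/q)) = 2" using q by simp
  ultimately show ?thesis using fne by auto
qed

end


theorem lemma2p5:
  fixes deg :: "'p \<Rightarrow> nat" and c q :: real
  assumes "arith_semigroup deg"
    and "0 < c" and "1 < q"
    and "axiom_A_sharp deg c q"
    and "\<exists>f r. Z_continuation deg q f r \<and> f (complex_of_real (- 1 / q)) \<noteq> 0"
  shows "\<exists>\<eta> K. 0 \<le> \<eta> \<and> \<eta> < 1 \<and>
           (\<forall>n m. 1 \<le> n \<longrightarrow> 1 \<le> m \<longrightarrow>
              \<bar>real_of_int (Csum deg n m)\<bar> \<le> K * q powr (\<eta> * real n) * exp (q ^ m) \<and>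
              \<bar>real_of_int (Msum deg n m)\<bar> \<le> K * q powr (\<eta> * real n) * exp (q ^ m))"
proof -
  note AS = assms(1) and c = assms(2) and q = assms(3)
  obtain \<eta>0 K where e0: "0 \<le> \<eta>0" "\<eta>0 < 1"
    and Kb: "\<And>n. \<bar>real (Gcount deg n) - c * q ^ n\<bar> \<le> K * q powr (\<eta>0 * real n)"
    using assms(4) unfolding axiom_A_sharp_def by blast
  obtain A where A: "0 < A" and Gb: "\<forall>k. real (Gcount deg k) \<le> A * q ^ k"
    using G_bound[OF AS q assms(4) c] by blast
  have Gb': "\<And>k. real (Gcount deg k) \<le> A * q ^ k" using Gb by blast
  obtain f r where Zc: "Z_continuation deg q f r" and fne: "f (complex_of_real (- 1 / q)) \<noteq> 0"
    using assms(5) by blast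
  have fne': "f (complex_of_real (-1/q)) \<noteq> 0" using fne by simp
  have Hm: "eval_fps (Hf deg c q) (complex_of_real (-1/q)) \<noteq> 0"
    by (rule Hm_from_f[OF AS c q A Gb' e0 Kb Zc fne'])
  obtain x B where x: "1 < x" "x < q" and B: "\<forall>k. \<bar>real_of_int (c0 deg k)\<bar> \<le> B * x^k"
    using c0_bound_ctx[OF AS c q A Gb' e0 Kb Hm] by blast
  obtain K' where K': "\<forall>n m. \<bar>real_of_int (Csum deg n m)\<bar> \<le> K' * x^n * exp (q^m) \<and>
                    \<bar>real_of_int (Msum deg n m)\<bar> \<le> K' * x^n * exp (q^m)"
    using main_from_c0[OF AS q A Gb x B] by blast
  define \<eta> where "\<eta> = ln x / ln q"
  have lx: "0 < ln x" "ln x < ln q" using x q by auto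
  have \<eta>: "0 \<le> \<eta>" "\<eta> < 1" using lx by (auto simp: \<eta>_def field_simps)
  have pw: "q powr (\<eta> * real n) = x ^ n" for n
  proof -
    have "q powr (\<eta> * real n) = exp (real n * ln x)"
      using q lx by (simp add: powr_def \<eta>_def field_simps)
    also have "\<dots> = x powr real n" using x by (simp add: powr_def)
    also have "\<dots> = x ^ n" using x by (simp add: powr_realpow)
    finally show ?thesis .
  qed
  show ?thesis
    by (rule exI[of _ \<eta>], rule exI[of _ K']) (use \<eta> K' pw in auto)
qed

end
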